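(* Let $X$ and $Y$ be finite-dimensional real Banach spaces. If there exists a Hahn-Banach operator $T:X\to Y$ of rank $k$, then $f(X^* )+f(Y)\ge k-1$.
   Context: All spaces are real. $B(X)$ denotes the closed unit ball of $X$. A bounded linear operator $T:X\to Y$ between Banach spaces is a Hahn-Banach operator if for every Banach space $Z$ and every isometric embedding of $X$ into $Z$ (regarding $X$ as a subspace of $Z$) there exists a bounded linear operator $\tilde T:Z\to Y$ with $\|\tilde T\|=\|T\|$ and $\tilde Tx=Tx$ for all $x\in X$. For a finite-dimensional space $X$, a support set of $B(X)$ is the intersection of $B(X)$ with a supporting hyperplane of $B(X)$; the dimension of a set is the dimension of its affine hull; $f(X)$ is the maximal dimension of a support set of $B(X)$. $X^*$ is the dual space of $X$. *)

theory Defs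
  imports "HOL-Analysis.Analysis"
begin

text \<open>A real normed vector space (given as a type) is finite-dimensional if it is
  spanned by a finite set.  Finite-dimensional normed spaces are automatically complete.\<close>
definition fin_dim_space :: "'a::real_normed_vector itself \<Rightarrow> bool" where
  "fin_dim_space _ \<longleftrightarrow> (\<exists>B::'a set. finite B \<and> span B = UNIV)"

text \<open>Dimension of a nonempty set = dimension of its affine hull
  = dimension of the linear span of its difference set.\<close>
definition affdim :: "'a::real_vector set \<Rightarrow> nat" where
  "affdim S = dim {x - y | x y. x \<in> S \<and> y \<in> S}"

definition support_set :: "'a::real_vector set \<Rightarrow> 'a set \<Rightarrow> bool" where
  "support_set B S \<longleftrightarrow> (\<exists>(\<phi>::'a \<Rightarrow> real) c. linear \<phi> \<and> \<phi> \<noteq> (\<lambda>x. 0) \<and>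
      (\<forall>x\<in>B. \<phi> x \<le> c) \<and> (\<exists>x\<in>B. \<phi> x = c) \<and> S = B \<inter> {x. \<phi> x = c})"

definition fX :: "'a::real_normed_vector itself \<Rightarrow> nat" where
  "fX _ = Max {affdim S | S. support_set (cball (0::'a) 1) S}"

type_synonym amb = "nat \<Rightarrow>\<^sub>C real"

definition norm_on :: "amb set \<Rightarrow> (amb \<Rightarrow> real) \<Rightarrow> bool" where
  "norm_on V N \<longleftrightarrow>
     (\<forall>z\<in>V. 0 \<le> N z \<and> (N z = 0 \<longleftrightarrow> z = 0)) \<and>
     (\<forall>z\<in>V. \<forall>a. N (a *\<^sub>R z) = \<bar>a\<bar> * N z) \<and>
     (\<forall>z\<in>V. \<forall>w\<in>V. N (z + w) \<le> N z + N w)"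

definition complete_on :: "amb set \<Rightarrow> (amb \<Rightarrow> real) \<Rightarrow> bool" where
  "complete_on V N \<longleftrightarrow>
     (\<forall>s::nat \<Rightarrow> amb. (\<forall>n. s n \<in> V) \<and>
        (\<forall>e>0. \<exists>M. \<forall>m\<ge>M. \<forall>n\<ge>M. N (s m - s n) < e) \<longrightarrow>
        (\<exists>z\<in>V. (\<lambda>n. N (s n - z)) \<longlonglongrightarrow> 0))"

definition banach_on :: "amb set \<Rightarrow> (amb \<Rightarrow> real) \<Rightarrow> bool" where
  "banach_on V N \<longleftrightarrow> subspace V \<and> norm_on V N \<and> complete_on V N"

definition linear_on :: "amb set \<Rightarrow> (amb \<Rightarrow> 'b::real_vector) \<Rightarrow> bool" where
  "linear_on V S \<longleftrightarrow> (\<forall>z\<in>V. \<forall>w\<in>V. S (z + w) = S z + S w) \<and>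
     (\<forall>z\<in>V. \<forall>a. S (a *\<^sub>R z) = a *\<^sub>R S z)"

definition bounded_on :: "amb set \<Rightarrow> (amb \<Rightarrow> real) \<Rightarrow> (amb \<Rightarrow> 'b::real_normed_vector) \<Rightarrow> bool" where
  "bounded_on V N S \<longleftrightarrow> (\<exists>K. \<forall>z\<in>V. norm (S z) \<le> K * N z)"

definition opnorm_on :: "amb set \<Rightarrow> (amb \<Rightarrow> real) \<Rightarrow> (amb \<Rightarrow> 'b::real_normed_vector) \<Rightarrow> real" where
  "opnorm_on V N S = Sup {norm (S z) | z. z \<in> V \<and> N z \<le> 1}"

definition hahn_banach_op :: "('a::real_normed_vector \<Rightarrow> 'b::real_normed_vector) \<Rightarrow> bool" where
  "hahn_banach_op T \<longleftrightarrow> bounded_linear T \<and>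
     (\<forall>(V::amb set) N (J::'a \<Rightarrow> amb).
        banach_on V N \<and> linear J \<and> (\<forall>x. J x \<in> V) \<and> (\<forall>x. N (J x) = norm x) \<longrightarrow>
        (\<exists>S::amb \<Rightarrow> 'b. linear_on V S \<and> bounded_on V N S \<and>
             opnorm_on V N S = onorm T \<and> (\<forall>x. S (J x) = T x)))"

end

theory Submission
  imports Defs
begin


lemma diag_subseq:
  fixes f :: "nat \<Rightarrow> 'i \<Rightarrow> real"
  assumes "finite I" "\<And>i k. i \<in> I \<Longrightarrow> \<bar>f k i\<bar> \<le> M"
  shows "\<exists>r. strict_mono r \<and> (\<forall>i\<in>I. \<exists>l. (\<lambda>k. f (r k) i) \<longlonglongrightarrow> l)"
  using assms
proof (induction I arbitrary: f rule: finite_induct)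
  case empty
  then show ?case by (auto intro: strict_monoI)
next
  case (insert j I)
  obtain r1 where r1: "strict_mono r1" "\<forall>i\<in>I. \<exists>l. (\<lambda>k. f (r1 k) i) \<longlonglongrightarrow> l"
    using insert.IH[of f] insert.prems by auto
  have "bounded (range (\<lambda>k. f (r1 k) j))"
    using insert.prems by (intro boundedI[of _ M]) auto
  then obtain l r2 where r2: "strict_mono r2" "((\<lambda>k. f (r1 k) j) \<circ> r2) \<longlonglongrightarrow> l"
    using bounded_imp_convergent_subsequence by blast
  have "\<exists>l. (\<lambda>k. f ((r1 \<circ> r2) k) i) \<longlonglongrightarrow> l" if "i \<in> insert j I" for i
    using that
    proof
      assume "i = j" then show ?thesis using r2 by (auto simp: o_def)
    next
      assume "i \<in> I"
      then obtain l' where "(\<lambda>k. f (r1 k) i) \<longlonglongrightarrow> l'" using r1 by auto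
      from LIMSEQ_subseq_LIMSEQ[OF this r2(1)] show ?thesis by (auto simp: o_def)
    qed
  moreover have "strict_mono (r1 \<circ> r2)" using r1 r2 by (simp add: strict_mono_o)
  ultimately show ?case by blast
qed

lemma coord_bound:
  fixes B :: "'a::real_normed_vector set"
  assumes fin: "finite B" and ind: "independent B"
  shows "\<exists>C. \<forall>c. \<forall>b\<in>B. \<bar>c b\<bar> \<le> C * norm (\<Sum>b\<in>B. c b *\<^sub>R b)"
proof (rule ccontr)
  assume "\<not> ?thesis"
  then have "\<forall>k::nat. \<exists>c. \<exists>b\<in>B. \<bar>c b\<bar> > real (Suc k) * norm (\<Sum>b\<in>B. c b *\<^sub>R b)"
    by (metis not_le)
  then obtain c bb where cb: "\<And>k. bb k \<in> B" "\<And>k. \<bar>c k (bb k)\<bar> > real (Suc k) * norm (\<Sum>b\<in>B. c k b *\<^sub>R b)"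
    by metis
  define s where "s k = (\<Sum>b\<in>B. \<bar>c k b\<bar>)" for k
  have spos: "s k > 0" for k
  proof -
    have "\<bar>c k (bb k)\<bar> > 0" using cb(2)[of k] by (smt (verit) norm_ge_zero of_nat_0_le_iff mult_nonneg_nonneg)
    moreover have "\<bar>c k (bb k)\<bar> \<le> s k" unfolding s_def using fin cb(1)[of k]
      by (intro member_le_sum) auto
    ultimately show ?thesis by simp
  qed
  define d where "d k b = c k b / s k" for k b
  have dsum: "(\<Sum>b\<in>B. \<bar>d k b\<bar>) = 1" for k
    using spos[of k] by (simp add: d_def abs_divide sum_divide_distrib[symmetric] s_def)
  have dle: "\<bar>d k b\<bar> \<le> 1" if "b \<in> B" for k b
    using dsum[of k] member_le_sum[of b B "\<lambda>b. \<bar>d k b\<bar>"] fin that by auto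
  have dnorm: "norm (\<Sum>b\<in>B. d k b *\<^sub>R b) \<le> 1 / real (Suc k)" for k
  proof -
    have "(\<Sum>b\<in>B. d k b *\<^sub>R b) = (1 / s k) *\<^sub>R (\<Sum>b\<in>B. c k b *\<^sub>R b)"
      by (simp add: d_def scaleR_sum_right divide_inverse mult.commute)
    then have "norm (\<Sum>b\<in>B. d k b *\<^sub>R b) = norm (\<Sum>b\<in>B. c k b *\<^sub>R b) / s k"
      using spos[of k] by simp
    also have "\<dots> \<le> (\<bar>c k (bb k)\<bar> / real (Suc k)) / s k"
      using cb(2)[of k] spos[of k] by (intro divide_right_mono) (simp_all add: field_simps)
    also have "\<dots> = (\<bar>c k (bb k)\<bar> / s k) / real (Suc k)" by simp
    also have "\<dots> \<le> 1 / real (Suc k)"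
      using dle[OF cb(1), of k] spos[of k] by (intro divide_right_mono) (simp_all add: d_def abs_divide)
    finally show ?thesis .
  qed
  obtain r where r: "strict_mono r" "\<forall>b\<in>B. \<exists>l. (\<lambda>k. d (r k) b) \<longlonglongrightarrow> l"
    using diag_subseq[OF fin, of d 1] dle by auto
  then obtain l where l: "\<And>b. b \<in> B \<Longrightarrow> (\<lambda>k. d (r k) b) \<longlonglongrightarrow> l b" by metis
  have "(\<lambda>k. \<Sum>b\<in>B. \<bar>d (r k) b\<bar>) \<longlonglongrightarrow> (\<Sum>b\<in>B. \<bar>l b\<bar>)"
    by (intro tendsto_sum tendsto_rabs l)
  moreover have "(\<lambda>k. \<Sum>b\<in>B. \<bar>d (r k) b\<bar>) \<longlonglongrightarrow> 1" using dsum by simp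
  ultimately have l1: "(\<Sum>b\<in>B. \<bar>l b\<bar>) = 1" using LIMSEQ_unique by blast
  have "(\<lambda>k. \<Sum>b\<in>B. d (r k) b *\<^sub>R b) \<longlonglongrightarrow> (\<Sum>b\<in>B. l b *\<^sub>R b)"
    by (intro tendsto_sum tendsto_scaleR l tendsto_const)
  moreover have "(\<lambda>k. \<Sum>b\<in>B. d (r k) b *\<^sub>R b) \<longlonglongrightarrow> 0"
  proof (rule tendsto_norm_zero_cancel, rule tendsto_sandwich[of "\<lambda>_. 0" _ _ "\<lambda>k. 1 / real (Suc (r k))"])
    show "\<forall>\<^sub>F n in sequentially. 0 \<le> norm (\<Sum>b\<in>B. d (r n) b *\<^sub>R b)" by simp
    show "\<forall>\<^sub>F n in sequentially. norm (\<Sum>b\<in>B. d (r n) b *\<^sub>R b) \<le> 1 / real (Suc (r n))"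
      using dnorm by simp
    show "(\<lambda>k. 1 / real (Suc (r k))) \<longlonglongrightarrow> 0"
      using LIMSEQ_subseq_LIMSEQ[OF LIMSEQ_Suc[OF lim_inverse_n'] r(1)] by (simp add: o_def divide_inverse)
  qed simp
  ultimately have "(\<Sum>b\<in>B. l b *\<^sub>R b) = 0" using LIMSEQ_unique by blast
  then have "\<forall>b\<in>B. l b = 0" using independentD[OF ind fin order_refl] by blast
  then show False using l1 by simp
qed



definition fdb :: "'a::real_vector set \<Rightarrow> bool" where
  "fdb B \<longleftrightarrow> finite B \<and> independent B \<and> span B = UNIV"

lemma fin_dim_fdb:
  assumes "fin_dim_space TYPE('a::real_normed_vector)"
  obtains B :: "'a::real_normed_vector set" where "fdb B"
proof -
  obtain A :: "'a set" where A: "finite A" "span A = UNIV"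
    using assms unfolding fin_dim_space_def by blast
  obtain B where B: "B \<subseteq> A" "independent B" "A \<subseteq> span B"
    using maximal_independent_subset[of A] by blast
  have "span B = UNIV"
    using B A by (metis span_mono span_span top.extremum_uniqueI)
  then show ?thesis using B A that finite_subset unfolding fdb_def by blast
qed

lemma fdb_rep:
  assumes "fdb B"
  shows "(\<Sum>b\<in>B. representation B x b *\<^sub>R b) = x"
  using assms unfolding fdb_def by (intro sum_representation_eq) auto

lemma fdb_rep_add:
  assumes "fdb B"
  shows "representation B (x + y) b = representation B x b + representation B y b"
  using assms unfolding fdb_def by (simp add: representation_add)

lemma fdb_rep_scale:
  assumes "fdb B"
  shows "representation B (a *\<^sub>R x) b = a * representation B x b"
  using assms unfolding fdb_def by (simp add: representation_scale)

lemma fdb_rep_linear: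
  fixes B :: "'a::real_vector set" and b :: 'a
  assumes "fdb B"
  shows "linear (\<lambda>y. representation B y b)"
  by (rule linearI) (simp_all add: fdb_rep_add[OF assms] fdb_rep_scale[OF assms])

lemma fdb_rep_bound:
  fixes B :: "'a::real_normed_vector set"
  assumes "fdb B"
  obtains C where "C \<ge> 0" "\<And>(x::'a) (b::'a). \<bar>representation B x b\<bar> \<le> C * norm x"
proof -
  obtain C where C: "\<forall>c. \<forall>b\<in>B. \<bar>c b\<bar> \<le> C * norm (\<Sum>b\<in>B. c b *\<^sub>R b)"
    using coord_bound[of B] assms unfolding fdb_def by blast
  have 1: "\<bar>representation B x b\<bar> \<le> max C 0 * norm x" for x b
  proof (cases "b \<in> B")
    case True
    then have "\<bar>representation B x b\<bar> \<le> C * norm (\<Sum>b\<in>B. representation B x b *\<^sub>R b)"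
      using C by blast
    then have "\<bar>representation B x b\<bar> \<le> C * norm x"
      using fdb_rep[OF assms] by simp
    also have "\<dots> \<le> max C 0 * norm x" by (intro mult_right_mono) auto
    finally show ?thesis .
  next
    case False
    then have "representation B x b = 0" using representation_ne_zero by blast
    then show ?thesis by simp
  qed
  show ?thesis by (rule that[of "max C 0"]) (use 1 in auto)
qed

lemma fdb_BW:
  fixes x :: "nat \<Rightarrow> 'a::real_normed_vector" and B :: "'a set"
  assumes "fdb B" "\<And>k. norm (x k) \<le> M"
  shows "\<exists>l r. strict_mono r \<and> (x \<circ> r) \<longlonglongrightarrow> l"
proof -
  obtain C where C: "C \<ge> 0" "\<And>x b. \<bar>representation B x b\<bar> \<le> C * norm x"
    using fdb_rep_bound[OF assms(1)] by blast
  have "\<bar>representation B (x k) b\<bar> \<le> C * M" for k b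
    using C(2)[of "x k" b] assms(2)[of k] C(1) by (meson mult_left_mono order_trans)
  then obtain r where r: "strict_mono r" "\<forall>b\<in>B. \<exists>l. (\<lambda>k. representation B (x (r k)) b) \<longlonglongrightarrow> l"
    using diag_subseq[of B "\<lambda>k b. representation B (x k) b" "C * M"] assms(1)
    unfolding fdb_def by blast
  then obtain l where l: "\<And>b. b \<in> B \<Longrightarrow> (\<lambda>k. representation B (x (r k)) b) \<longlonglongrightarrow> l b" by metis
  have "(\<lambda>k. \<Sum>b\<in>B. representation B (x (r k)) b *\<^sub>R b) \<longlonglongrightarrow> (\<Sum>b\<in>B. l b *\<^sub>R b)"
    by (intro tendsto_sum tendsto_scaleR l tendsto_const)
  then have "(x \<circ> r) \<longlonglongrightarrow> (\<Sum>b\<in>B. l b *\<^sub>R b)"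
    using fdb_rep[OF assms(1)] by (simp add: o_def)
  then show ?thesis using r(1) by blast
qed

lemma fdb_bounded_linear:
  fixes f :: "'a::real_normed_vector \<Rightarrow> 'c::real_normed_vector" and B :: "'a set"
  assumes "fdb B" "linear f"
  shows "bounded_linear f"
proof -
  obtain C where C: "C \<ge> 0" "\<And>x b. \<bar>representation B x b\<bar> \<le> C * norm x"
    using fdb_rep_bound[OF assms(1)] by blast
  have "norm (f x) \<le> norm x * (C * (\<Sum>b\<in>B. norm (f b)))" for x
  proof -
    have "f x = (\<Sum>b\<in>B. representation B x b *\<^sub>R f b)"
      using fdb_rep[OF assms(1), of x] assms(2)
      by (metis (no_types, lifting) linear_scale linear_sum sum.cong)
    then have "norm (f x) \<le> (\<Sum>b\<in>B. \<bar>representation B x b\<bar> * norm (f b))"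
      by (metis (no_types, lifting) norm_scaleR norm_sum order_trans sum_mono order_refl)
    also have "\<dots> \<le> (\<Sum>b\<in>B. (C * norm x) * norm (f b))"
      by (intro sum_mono mult_right_mono C(2)) auto
    also have "\<dots> = norm x * (C * (\<Sum>b\<in>B. norm (f b)))"
      by (simp add: sum_distrib_left mult_ac)
    finally show ?thesis .
  qed
  then show ?thesis
    using assms(2) by (intro bounded_linear_intro[where K="C * (\<Sum>b\<in>B. norm (f b))"])
      (auto simp: linear_add linear_scale)
qed

lemma fdb_dual:
  fixes B :: "'a::real_normed_vector set"
  assumes "fdb B"
  shows "\<exists>W :: ('a \<Rightarrow>\<^sub>L real) set. finite W \<and> span W = UNIV"
proof -
  define e where "e b = Blinfun (\<lambda>x. representation B x b)" for b
  have eapp: "blinfun_apply (e b) x = representation B x b" for b x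
    unfolding e_def
    by (subst bounded_linear_Blinfun_apply)
      (auto intro: fdb_bounded_linear[OF assms] fdb_rep_linear[OF assms])
  have "f \<in> span (e ` B)" for f :: "'a \<Rightarrow>\<^sub>L real"
  proof -
    have "f = (\<Sum>b\<in>B. f b *\<^sub>R e b)"
    proof (rule blinfun_eqI)
      fix x
      have "f x = f (\<Sum>b\<in>B. representation B x b *\<^sub>R b)" using fdb_rep[OF assms] by simp
      also have "\<dots> = (\<Sum>b\<in>B. representation B x b * f b)"
        by (simp add: blinfun.sum_right blinfun.scaleR_right)
      also have "\<dots> = blinfun_apply (\<Sum>b\<in>B. f b *\<^sub>R e b) x"
        by (simp add: blinfun.sum_left eapp mult.commute scaleR_blinfun.rep_eq)
      finally show "f x = blinfun_apply (\<Sum>b\<in>B. f b *\<^sub>R e b) x" .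
    qed
    also have "\<dots> \<in> span (e ` B)"
      by (intro span_sum span_scale span_base) auto
    finally show ?thesis .
  qed
  then show ?thesis using assms unfolding fdb_def by blast
qed

lemma fdb_compact_attains:
  fixes x :: "nat \<Rightarrow> 'a::real_normed_vector" and B :: "'a set"
  assumes "fdb B" "bounded S" "closed S" "\<And>k. x k \<in> S"
  shows "\<exists>l r. l \<in> S \<and> strict_mono r \<and> (x \<circ> r) \<longlonglongrightarrow> l"
proof -
  obtain M where "\<And>y. y \<in> S \<Longrightarrow> norm y \<le> M" using assms(2) bounded_iff by blast
  then obtain l r where lr: "strict_mono r" "(x \<circ> r) \<longlonglongrightarrow> l"
    using fdb_BW[OF assms(1), of x M] assms(4) by blast
  have "l \<in> S" using closed_sequentially[OF assms(3), of "x \<circ> r" l] lr(2) assms(4) by (auto simp: o_def)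
  then show ?thesis using lr by blast
qed



definition good :: "'a::real_normed_vector set \<Rightarrow> ('a \<Rightarrow> real) \<Rightarrow> bool" where
  "good W \<phi> \<longleftrightarrow> subspace W \<and> (\<forall>u\<in>W. \<forall>v\<in>W. \<phi> (u + v) = \<phi> u + \<phi> v) \<and>
     (\<forall>u\<in>W. \<forall>a. \<phi> (a *\<^sub>R u) = a * \<phi> u) \<and> (\<forall>u\<in>W. \<phi> u \<le> norm u)"

lemma hb_step:
  fixes W :: "'a::real_normed_vector set"
  assumes g: "good W \<phi>" and v: "v \<notin> W"
  shows "\<exists>\<psi>. good (span (insert v W)) \<psi> \<and> (\<forall>u\<in>W. \<psi> u = \<phi> u) \<and>
           \<psi> v = Sup {\<phi> w - norm (w - v) | w. w \<in> W}"
proof -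
  have sW: "subspace W" and add: "\<And>u w. u \<in> W \<Longrightarrow> w \<in> W \<Longrightarrow> \<phi> (u + w) = \<phi> u + \<phi> w"
    and sc: "\<And>u a. u \<in> W \<Longrightarrow> \<phi> (a *\<^sub>R u) = a * \<phi> u" and bd: "\<And>u. u \<in> W \<Longrightarrow> \<phi> u \<le> norm u"
    using g unfolding good_def by auto
  have W0: "0 \<in> W" using sW subspace_0 by blast
  have phi0: "\<phi> 0 = 0" using sc[OF W0, of 0] by simp
  define S where "S = {\<phi> w - norm (w - v) | w. w \<in> W}"
  define c where "c = Sup S"
  have key: "\<phi> w1 - norm (w1 - v) \<le> norm (w2 + v) - \<phi> w2" if "w1 \<in> W" "w2 \<in> W" for w1 w2
  proof -
    have "\<phi> w1 + \<phi> w2 = \<phi> (w1 + w2)" using add that by simp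
    also have "\<dots> \<le> norm (w1 + w2)" using bd that sW subspace_add by blast
    also have "\<dots> = norm ((w1 - v) + (w2 + v))" by simp
    also have "\<dots> \<le> norm (w1 - v) + norm (w2 + v)" by (rule norm_triangle_ineq)
    finally show ?thesis by simp
  qed
  have Sne: "S \<noteq> {}" using W0 unfolding S_def by blast
  have Sbdd: "bdd_above S" unfolding S_def bdd_above_def using key W0 by blast
  have c_ub: "c \<le> norm (w2 + v) - \<phi> w2" if "w2 \<in> W" for w2
    unfolding c_def using Sne key that by (intro cSup_least) (auto simp: S_def)
  have c_lb: "\<phi> w1 - norm (w1 - v) \<le> c" if "w1 \<in> W" for w1
    unfolding c_def using Sbdd that by (intro cSup_upper) (auto simp: S_def)
  define t where "t z = (SOME t. z - t *\<^sub>R v \<in> W)" for z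
  have tw: "t (w + s *\<^sub>R v) = s" if "w \<in> W" for w s
  proof -
    have ex: "w + s *\<^sub>R v - s *\<^sub>R v \<in> W" using that by simp
    have "w + s *\<^sub>R v - t (w + s *\<^sub>R v) *\<^sub>R v \<in> W"
      unfolding t_def by (rule someI[of _ s]) (use ex in simp)
    then have "(w + s *\<^sub>R v - t (w + s *\<^sub>R v) *\<^sub>R v) - w \<in> W" using that sW subspace_diff by blast
    then have h: "(s - t (w + s *\<^sub>R v)) *\<^sub>R v \<in> W" by (simp add: algebra_simps)
    show ?thesis
    proof (rule ccontr)
      assume ne: "t (w + s *\<^sub>R v) \<noteq> s"
      have "inverse (s - t (w + s *\<^sub>R v)) *\<^sub>R ((s - t (w + s *\<^sub>R v)) *\<^sub>R v) \<in> W"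
        using h sW subspace_scale by blast
      then have "v \<in> W" using ne by simp
      then show False using v by blast
    qed
  qed
  have spanW: "span W = W" using sW by (simp add: span_eq_iff)
  have spanI: "span (insert v W) = {w + s *\<^sub>R v | w s. w \<in> W}"
  proof -
    have "span (insert v W) = {x. \<exists>k. x - k *\<^sub>R v \<in> W}"
      using span_insert[of v W] spanW by simp
    also have "\<dots> = {w + s *\<^sub>R v | w s. w \<in> W}"
    proof (intro set_eqI iffI)
      fix z assume "z \<in> {x. \<exists>k. x - k *\<^sub>R v \<in> W}"
      then obtain k where "z - k *\<^sub>R v \<in> W" by blast
      moreover have "z = (z - k *\<^sub>R v) + k *\<^sub>R v" by simp
      ultimately show "z \<in> {w + s *\<^sub>R v | w s. w \<in> W}" by blast
    next
      fix z assume "z \<in> {w + s *\<^sub>R v | w s. w \<in> W}"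
      then obtain w s where "w \<in> W" "z = w + s *\<^sub>R v" by blast
      then have "z - s *\<^sub>R v \<in> W" by simp
      then show "z \<in> {x. \<exists>k. x - k *\<^sub>R v \<in> W}" by blast
    qed
    finally show ?thesis .
  qed
  define \<psi> where "\<psi> z = \<phi> (z - t z *\<^sub>R v) + t z * c" for z
  have psi: "\<psi> (w + s *\<^sub>R v) = \<phi> w + s * c" if "w \<in> W" for w s
    unfolding \<psi>_def tw[OF that] by simp
  have bound: "\<phi> w + s * c \<le> norm (w + s *\<^sub>R v)" if w: "w \<in> W" for w s
  proof (cases s "0::real" rule: linorder_cases)
    case equal
    then show ?thesis using bd w by simp
  next
    case greater
    have w': "inverse s *\<^sub>R w \<in> W" using w sW subspace_scale by blast
    have "c \<le> norm (inverse s *\<^sub>R w + v) - \<phi> (inverse s *\<^sub>R w)" using c_ub[OF w'] .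
    then have "s * c \<le> s * (norm (inverse s *\<^sub>R w + v) - \<phi> (inverse s *\<^sub>R w))"
      using greater by (intro mult_left_mono) auto
    also have "\<dots> = norm (s *\<^sub>R (inverse s *\<^sub>R w + v)) - \<phi> w"
      using greater sc[OF w] by (simp add: right_diff_distrib)
    also have "s *\<^sub>R (inverse s *\<^sub>R w + v) = w + s *\<^sub>R v"
      using greater by (simp add: scaleR_add_right)
    finally show ?thesis by simp
  next
    case less
    define m where "m = - s"
    have m: "m > 0" using less by (simp add: m_def)
    have w': "inverse m *\<^sub>R w \<in> W" using w sW subspace_scale by blast
    have "\<phi> (inverse m *\<^sub>R w) - norm (inverse m *\<^sub>R w - v) \<le> c" using c_lb[OF w'] .
    then have "m * (\<phi> (inverse m *\<^sub>R w) - norm (inverse m *\<^sub>R w - v)) \<le> m * c"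
      using m by (intro mult_left_mono) auto
    moreover have "m * (\<phi> (inverse m *\<^sub>R w) - norm (inverse m *\<^sub>R w - v)) = \<phi> w - norm (m *\<^sub>R (inverse m *\<^sub>R w - v))"
      using m sc[OF w] by (simp add: right_diff_distrib)
    moreover have "m *\<^sub>R (inverse m *\<^sub>R w - v) = w + s *\<^sub>R v"
      using m by (simp add: scaleR_diff_right m_def)
    ultimately have "\<phi> w - norm (w + s *\<^sub>R v) \<le> m * c" by metis
    moreover have "m * c = - (s * c)" by (simp add: m_def)
    ultimately show ?thesis by linarith
  qed
  have "good (span (insert v W)) \<psi>"
    unfolding good_def
  proof (intro conjI ballI allI)
    show "subspace (span (insert v W))" by simp
  next
    fix u z assume "u \<in> span (insert v W)" "z \<in> span (insert v W)"
    then obtain w1 s1 w2 s2 where "u = w1 + s1 *\<^sub>R v" "w1 \<in> W" "z = w2 + s2 *\<^sub>R v" "w2 \<in> W"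
      unfolding spanI by blast
    moreover then have "u + z = (w1 + w2) + (s1 + s2) *\<^sub>R v" "w1 + w2 \<in> W"
      using sW subspace_add by (auto simp: algebra_simps)
    ultimately have "\<psi> (u + z) = \<phi> (w1 + w2) + (s1 + s2) * c" using psi by metis
    also have "\<dots> = (\<phi> w1 + s1 * c) + (\<phi> w2 + s2 * c)"
      using add \<open>w1 \<in> W\<close> \<open>w2 \<in> W\<close> by (simp add: algebra_simps)
    finally show "\<psi> (u + z) = \<psi> u + \<psi> z"
      using psi \<open>w1 \<in> W\<close> \<open>w2 \<in> W\<close> \<open>u = _\<close> \<open>z = _\<close> by simp
  next
    fix u a assume "u \<in> span (insert v W)"
    then obtain w1 s1 where "u = w1 + s1 *\<^sub>R v" "w1 \<in> W"
      unfolding spanI by blast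
    moreover then have "a *\<^sub>R u = (a *\<^sub>R w1) + (a * s1) *\<^sub>R v" "a *\<^sub>R w1 \<in> W"
      using sW subspace_scale by (auto simp: algebra_simps)
    ultimately have "\<psi> (a *\<^sub>R u) = \<phi> (a *\<^sub>R w1) + (a * s1) * c" using psi by metis
    also have "\<dots> = a * (\<phi> w1 + s1 * c)"
      using sc \<open>w1 \<in> W\<close> by (simp add: algebra_simps)
    finally show "\<psi> (a *\<^sub>R u) = a * \<psi> u"
      using psi \<open>w1 \<in> W\<close> \<open>u = _\<close> by simp
  next
    fix u assume "u \<in> span (insert v W)"
    then obtain w1 s1 where "u = w1 + s1 *\<^sub>R v" "w1 \<in> W"
      unfolding spanI by blast
    then show "\<psi> u \<le> norm u" using psi bound by simp
  qed
  moreover have "\<forall>u\<in>W. \<psi> u = \<phi> u" using psi[of _ 0] by simp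
  moreover have "\<psi> v = c" using psi[OF W0, of 1] phi0 by simp
  ultimately show ?thesis unfolding c_def S_def by blast
qed

lemma hb_fin:
  fixes B :: "'a::real_normed_vector set" and x :: 'a
  assumes "fdb B"
  shows "\<exists>\<phi>. linear \<phi> \<and> (\<forall>y. \<bar>\<phi> y\<bar> \<le> norm y) \<and> \<phi> x = norm x"
proof (cases "x = 0")
  case True
  then show ?thesis by (intro exI[of _ "\<lambda>_. 0"]) (auto intro: linearI)
next
  case False
  have base: "\<exists>\<phi>. good (span {x}) \<phi> \<and> \<phi> x = norm x"
  proof -
    have g0: "good {0::'a} (\<lambda>_. 0)" unfolding good_def by (auto simp: subspace_def)
    have "- x \<notin> {0}" using False by simp
    from hb_step[OF g0 this] obtain \<psi> where
      \<psi>: "good (span (insert (-x) {0})) \<psi>" "\<psi> (-x) = Sup {0 - norm (w - - x) | w. w \<in> {0::'a}}"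
      by blast
    have "{0 - norm (w - - x) | w. w \<in> {0::'a}} = {- norm x}" by auto
    then have psx: "\<psi> (-x) = - norm x" using \<psi>(2) by simp
    have "span {-x} = span {x}"
      unfolding span_eq using span_neg[OF span_base[of x "{x}"]] span_neg[OF span_base[of "-x" "{-x}"]] by auto
    moreover have "insert (-x) {0} = insert 0 {-x}" by auto
    ultimately have sp: "span (insert (-x) {0}) = span {x}" by simp
    have "-x \<in> span (insert (-x) {0})" by (simp add: span_base)
    then have "\<psi> ((-1) *\<^sub>R (-x)) = (-1) * \<psi> (-x)"
      using \<psi>(1) unfolding good_def by blast
    then have "\<psi> x = norm x" using psx by simp
    then show ?thesis using \<psi>(1) sp by auto
  qed
  have ind: "finite C \<Longrightarrow> \<exists>\<phi>. good (span (insert x C)) \<phi> \<and> \<phi> x = norm x" for C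
  proof (induction C rule: finite_induct)
    case empty
    then show ?case using base by simp
  next
    case (insert v C)
    then obtain \<phi> where \<phi>: "good (span (insert x C)) \<phi>" "\<phi> x = norm x" by blast
    show ?case
    proof (cases "v \<in> span (insert x C)")
      case True
      then have "span (insert x (insert v C)) = span (insert x C)"
        using span_redundant[OF True] by (simp add: insert_commute)
      then show ?thesis using \<phi> by auto
    next
      case False
      from hb_step[OF \<phi>(1) False] obtain \<psi> where
        \<psi>: "good (span (insert v (span (insert x C)))) \<psi>" "\<forall>u\<in>span (insert x C). \<psi> u = \<phi> u"
        by blast
      have "span (insert v (span (insert x C))) = span (insert x (insert v C))"
        unfolding span_eq
      proof (intro conjI subsetI)
        fix z assume "z \<in> insert v (span (insert x C))"
        have sub: "span (insert x C) \<subseteq> span (insert x (insert v C))" by (intro span_mono) auto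
        from \<open>z \<in> insert v (span (insert x C))\<close> show "z \<in> span (insert x (insert v C))"
        proof
          assume "z = v" then show ?thesis by (simp add: span_base)
        next
          assume "z \<in> span (insert x C)" then show ?thesis using sub by blast
        qed
      next
        fix z assume "z \<in> insert x (insert v C)"
        then have "z = v \<or> z \<in> insert x C" by auto
        then show "z \<in> span (insert v (span (insert x C)))"
        proof
          assume "z = v" then show ?thesis by (simp add: span_base)
        next
          assume "z \<in> insert x C"
          then have "z \<in> span (insert x C)" by (simp add: span_base)
          then show ?thesis by (simp add: span_base)
        qed
      qed
      moreover have "\<psi> x = norm x" using \<psi>(2) \<phi>(2) span_base[of x "insert x C"] by simp
      ultimately show ?thesis using \<psi>(1) by auto
    qed
  qed
  obtain \<phi> where \<phi>: "good (span (insert x B)) \<phi>" "\<phi> x = norm x"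
    using ind assms unfolding fdb_def by blast
  have "span B \<subseteq> span (insert x B)" by (intro span_mono) auto
  then have U: "span (insert x B) = UNIV" using assms unfolding fdb_def by auto
  have lin: "linear \<phi>" using \<phi>(1) U unfolding good_def by (intro linearI) auto
  have "\<bar>\<phi> y\<bar> \<le> norm y" for y
  proof -
    have "\<phi> y \<le> norm y" "\<phi> (-y) \<le> norm (-y)" using \<phi>(1) U unfolding good_def by blast+
    moreover have "\<phi> (-y) = - \<phi> y" using lin by (simp add: linear_neg)
    ultimately show ?thesis by simp
  qed
  then show ?thesis using lin \<phi>(2) by blast
qed



lemma dim_le_span_card:
  fixes A :: "'a::real_vector set" and W0 :: "'a set"
  assumes W0: "finite W0" "span W0 = UNIV" and E: "finite E" and A: "A \<subseteq> span (S \<union> E)"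
  shows "dim A \<le> dim S + card E"
proof -
  obtain Sb where Sb: "Sb \<subseteq> S" "independent Sb" "S \<subseteq> span Sb" "card Sb = dim S"
    using basis_exists[of S] by blast
  have fSb: "finite Sb" using independent_span_bound[OF W0(1) Sb(2)] W0(2) by auto
  have "S \<union> E \<subseteq> span (Sb \<union> E)"
    using Sb(3) span_mono[of Sb "Sb \<union> E"] span_superset[of "Sb \<union> E"] by blast
  then have "span (S \<union> E) \<subseteq> span (Sb \<union> E)"
    by (intro span_minimal) auto
  then have "dim A \<le> card (Sb \<union> E)"
    using A fSb E by (intro dim_le_card) auto
  also have "\<dots> \<le> card Sb + card E" by (rule card_Un_le)
  finally show ?thesis using Sb(4) by simp
qed

lemma affdim_le:
  fixes S :: "'a::real_vector set" and W0 :: "'a set"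
  assumes "finite W0" "span W0 = UNIV"
  shows "affdim S \<le> card W0"
  unfolding affdim_def using assms by (intro dim_le_card) auto

lemma fX_ge:
  fixes S :: "'a::real_normed_vector set" and W0 :: "'a set"
  assumes "finite W0" "span W0 = UNIV" "support_set (cball 0 1) S"
  shows "affdim S \<le> fX TYPE('a)"
proof -
  have "{affdim S | S. support_set (cball (0::'a) 1) S} \<subseteq> {..card W0}"
    using affdim_le[OF assms(1,2)] by auto
  then have "finite {affdim S | S. support_set (cball (0::'a) 1) S}"
    using finite_subset by blast
  then show ?thesis unfolding fX_def using assms(3) by (intro Max_ge) auto
qed

lemma codim_lemma:
  fixes H :: "('a::real_normed_vector \<Rightarrow>\<^sub>L real) set"
  assumes "finite H"
  shows "\<exists>E. finite E \<and> card E \<le> card H \<and> UNIV \<subseteq> span ({x. \<forall>h\<in>H. h x = 0} \<union> E)"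
  using assms
proof (induction H rule: finite_induct)
  case empty
  then show ?case by (intro exI[of _ "{}"]) (auto simp: span_superset)
next
  case (insert h H)
  define WH where "WH = {x. \<forall>h\<in>H. blinfun_apply h x = 0}"
  define W' where "W' = {x. \<forall>h\<in>insert h H. blinfun_apply h x = 0}"
  obtain E where E: "finite E" "card E \<le> card H" "UNIV \<subseteq> span (WH \<union> E)"
    using insert.IH unfolding WH_def by blast
  show ?case
  proof (cases "\<forall>w\<in>WH. h w = 0")
    case True
    then have "W' = WH" unfolding W'_def WH_def by auto
    then show ?thesis using E insert.hyps unfolding W'_def
      by (intro exI[of _ E]) auto
  next
    case False
    then obtain w1 where w1: "w1 \<in> WH" "h w1 \<noteq> 0" by blast
    define w where "w = inverse (h w1) *\<^sub>R w1"
    have hw: "h w = 1" using w1(2) by (simp add: w_def blinfun.scaleR_right)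
    have wWH: "w \<in> WH" using w1(1) by (simp add: w_def WH_def blinfun.scaleR_right)
    have "WH \<subseteq> span (W' \<union> insert w E)"
    proof
      fix z assume z: "z \<in> WH"
      have "z - h z *\<^sub>R w \<in> W'"
        using z wWH hw by (simp add: W'_def WH_def blinfun.diff_right blinfun.scaleR_right)
      then have a: "z - h z *\<^sub>R w \<in> span (W' \<union> insert w E)" by (simp add: span_base)
      have b: "h z *\<^sub>R w \<in> span (W' \<union> insert w E)" by (intro span_scale span_base) auto
      have "z = (z - h z *\<^sub>R w) + h z *\<^sub>R w" by simp
      then show "z \<in> span (W' \<union> insert w E)" using span_add[OF a b] by simp
    qed
    moreover have "E \<subseteq> span (W' \<union> insert w E)" using span_superset[of "W' \<union> insert w E"] by blast
    ultimately have "WH \<union> E \<subseteq> span (W' \<union> insert w E)" by blast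
    then have "span (WH \<union> E) \<subseteq> span (W' \<union> insert w E)"
      by (intro span_minimal subspace_span)
    moreover have "card (insert w E) \<le> card (insert h H)"
      using E insert.hyps by (simp add: card_insert_if)
    ultimately show ?thesis using E unfolding W'_def
      by (intro exI[of _ "insert w E"]) auto
  qed
qed



lemma fin_span_fdb:
  fixes W :: "'a::real_vector set"
  assumes "finite W" "span W = UNIV"
  obtains B :: "'a set" where "fdb B"
proof -
  obtain B where B: "B \<subseteq> W" "independent B" "W \<subseteq> span B"
    using maximal_independent_subset[of W] by blast
  have "span W \<subseteq> span B" using B(3) by (intro span_minimal) auto
  then have "span B = UNIV" using assms(2) by auto
  then show ?thesis using B assms that finite_subset unfolding fdb_def by blast
qed

lemma claimA:
  fixes x0 x :: "'a::real_normed_vector" and Wd :: "('a \<Rightarrow>\<^sub>L real) set" and \<epsilon> :: real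
  assumes Wd: "finite Wd" "span Wd = UNIV" and nx0: "norm x0 \<le> 1"
    and perp: "\<And>f :: 'a \<Rightarrow>\<^sub>L real. norm f \<le> 1 \<Longrightarrow> blinfun_apply f x0 = 1 \<Longrightarrow> blinfun_apply f x = 0"
    and e: "\<epsilon> > 0"
  shows "\<exists>\<eta>>0. \<forall>f. norm f \<le> 1 \<and> \<bar>blinfun_apply f x0\<bar> \<ge> 1 - \<eta> \<longrightarrow> \<bar>blinfun_apply f x\<bar> \<le> \<epsilon>"
proof (rule ccontr)
  assume "\<not> ?thesis"
  then have "\<forall>k::nat. \<exists>f. norm f \<le> 1 \<and> \<bar>blinfun_apply f x0\<bar> \<ge> 1 - 1 / real (Suc k) \<and> \<bar>blinfun_apply f x\<bar> > \<epsilon>"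
    by (metis (no_types, lifting) divide_pos_pos not_le of_nat_0_less_iff zero_less_Suc zero_less_one)
  then obtain f where f: "\<And>k. norm (f k) \<le> 1" "\<And>k. \<bar>blinfun_apply (f k) x0\<bar> \<ge> 1 - 1 / real (Suc k)"
    "\<And>k. \<bar>blinfun_apply (f k) x\<bar> > \<epsilon>"
    by metis
  define h where "h k = (if blinfun_apply (f k) x0 \<ge> 0 then f k else - f k)" for k
  have h1: "norm (h k) \<le> 1" for k using f(1)[of k] by (simp add: h_def)
  have h2: "blinfun_apply (h k) x0 \<ge> 1 - 1 / real (Suc k)" for k
    using f(2)[of k] by (auto simp: h_def uminus_blinfun.rep_eq)
  have h3: "\<bar>blinfun_apply (h k) x\<bar> > \<epsilon>" for k
    using f(3)[of k] by (auto simp: h_def uminus_blinfun.rep_eq)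
  obtain Bd :: "('a \<Rightarrow>\<^sub>L real) set" where Bd: "fdb Bd" using fin_span_fdb[OF Wd] by blast
  obtain l r where lr: "l \<in> cball 0 1" "strict_mono r" "(h \<circ> r) \<longlonglongrightarrow> l"
    using fdb_compact_attains[OF Bd, of "cball 0 1" h] h1 by auto
  have lim: "(\<lambda>k. h (r k)) \<longlonglongrightarrow> l" using lr(3) by (simp add: o_def)
  have limx0: "(\<lambda>k. blinfun_apply (h (r k)) x0) \<longlonglongrightarrow> blinfun_apply l x0"
    by (intro blinfun.tendsto[OF lim tendsto_const])
  have limx: "(\<lambda>k. \<bar>blinfun_apply (h (r k)) x\<bar>) \<longlonglongrightarrow> \<bar>blinfun_apply l x\<bar>"
    by (intro tendsto_rabs blinfun.tendsto[OF lim tendsto_const])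
  have low: "(\<lambda>k. 1 - 1 / real (Suc k)) \<longlonglongrightarrow> 1"
    using tendsto_diff[OF tendsto_const LIMSEQ_Suc[OF lim_inverse_n'], of 1]
    by (simp add: divide_inverse)
  have "1 - 1 / real (Suc k) \<le> blinfun_apply (h (r k)) x0" for k
  proof -
    have "k \<le> r k" using seq_suble[OF lr(2)] by simp
    then have "1 / real (Suc (r k)) \<le> 1 / real (Suc k)"
      by (intro divide_left_mono) auto
    then show ?thesis using h2[of "r k"] by linarith
  qed
  then have ge: "1 \<le> blinfun_apply l x0"
    using tendsto_le[OF _ limx0 low] by simp
  have "\<bar>blinfun_apply l x0\<bar> \<le> norm l * norm x0" using norm_blinfun[of l x0] by simp
  also have "\<dots> \<le> 1" using lr(1) nx0 by (simp add: mult_le_one)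
  finally have "blinfun_apply l x0 = 1" using ge by simp
  moreover have "norm l \<le> 1" using lr(1) by simp
  ultimately have "blinfun_apply l x = 0" using perp by blast
  moreover have "\<epsilon> \<le> \<bar>blinfun_apply l x\<bar>"
  proof -
    have "\<forall>\<^sub>F k in sequentially. \<epsilon> \<le> \<bar>blinfun_apply (h (r k)) x\<bar>"
      using h3 less_imp_le by (intro always_eventually) blast
    then show ?thesis using tendsto_le[OF _ limx tendsto_const] by simp
  qed
  ultimately show False using e by simp
qed

lemma bc_apply:
  fixes f :: "nat \<Rightarrow> real"
  assumes "\<And>n. \<bar>f n\<bar> \<le> M"
  shows "apply_bcontfun (Bcontfun f) = f"
proof -
  have "f \<in> bcontfun" using assms by (intro bcontfun_normI[of f M]) auto
  then show ?thesis by (simp add: Bcontfun_inverse)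
qed

lemma bc_norm_le:
  fixes f :: "nat \<Rightarrow> real"
  assumes "\<And>n. \<bar>f n\<bar> \<le> M"
  shows "norm (Bcontfun f) \<le> M"
  using assms bc_apply[OF assms] by (intro norm_bound) auto

lemma bc_le_norm:
  fixes z :: "nat \<Rightarrow>\<^sub>C real"
  shows "\<bar>apply_bcontfun z n\<bar> \<le> norm z"
  using norm_bounded[of z n] by simp

lemma amb_complete:
  fixes s :: "nat \<Rightarrow> amb"
  assumes C: "\<forall>e>0. \<exists>M. \<forall>m\<ge>M. \<forall>n\<ge>M. norm (s m - s n) < e"
  shows "\<exists>z. (\<lambda>k. norm (s k - z)) \<longlonglongrightarrow> 0"
proof -
  have pw: "\<bar>apply_bcontfun (s m) n - apply_bcontfun (s k) n\<bar> \<le> norm (s m - s k)" for m k n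
    using bc_le_norm[of "s m - s k" n] by simp
  have "Cauchy (\<lambda>k. apply_bcontfun (s k) n)" for n
  proof (rule metric_CauchyI)
    fix e :: real assume "e > 0"
    then obtain M where "\<forall>m\<ge>M. \<forall>k\<ge>M. norm (s m - s k) < e" using C by blast
    then show "\<exists>M. \<forall>m\<ge>M. \<forall>k\<ge>M. dist (apply_bcontfun (s m) n) (apply_bcontfun (s k) n) < e"
      using pw by (metis dist_real_def order_le_less_trans)
  qed
  then have "convergent (\<lambda>k. apply_bcontfun (s k) n)" for n by (simp add: Cauchy_convergent_iff)
  then obtain g where g: "\<And>n. (\<lambda>k. apply_bcontfun (s k) n) \<longlonglongrightarrow> g n"
    unfolding convergent_def by metis
  obtain M1 where M1: "\<forall>m\<ge>M1. \<forall>k\<ge>M1. norm (s m - s k) < 1" using C by (meson zero_less_one)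
  have gb: "\<bar>g n\<bar> \<le> norm (s M1) + 1" for n
  proof -
    have "\<bar>apply_bcontfun (s m) n\<bar> \<le> norm (s M1) + 1" if "m \<ge> M1" for m
    proof -
      have "\<bar>apply_bcontfun (s m) n - apply_bcontfun (s M1) n\<bar> \<le> 1"
        using pw[where m=m and k=M1 and n=n] M1 that by (meson less_imp_le order_refl order_trans)
      moreover have "\<bar>apply_bcontfun (s M1) n\<bar> \<le> norm (s M1)" by (rule bc_le_norm)
      ultimately show ?thesis by linarith
    qed
    then have "\<forall>\<^sub>F m in sequentially. \<bar>apply_bcontfun (s m) n\<bar> \<le> norm (s M1) + 1"
      using eventually_sequentially by blast
    then show ?thesis using tendsto_le[OF _ tendsto_const tendsto_rabs[OF g]] by simp
  qed
  define z where "z = Bcontfun g"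
  have zapp: "apply_bcontfun z = g" unfolding z_def using gb by (rule bc_apply)
  have "(\<lambda>k. norm (s k - z)) \<longlonglongrightarrow> 0"
  proof (rule LIMSEQ_I)
    fix r :: real assume r: "r > 0"
    then obtain M where M: "\<forall>m\<ge>M. \<forall>k\<ge>M. norm (s m - s k) < r / 2"
      using C by (meson half_gt_zero)
    have "norm (norm (s k - z) - 0) < r" if k: "k \<ge> M" for k
    proof -
      have "\<bar>apply_bcontfun (s k) n - g n\<bar> \<le> r / 2" for n
      proof -
        have "\<forall>\<^sub>F m in sequentially. \<bar>apply_bcontfun (s k) n - apply_bcontfun (s m) n\<bar> \<le> r / 2"
          using M k pw[where m=k and n=n] eventually_sequentially
          by (metis (no_types, lifting) less_imp_le order_trans)
        moreover have "(\<lambda>m. \<bar>apply_bcontfun (s k) n - apply_bcontfun (s m) n\<bar>) \<longlonglongrightarrow> \<bar>apply_bcontfun (s k) n - g n\<bar>"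
          by (intro tendsto_rabs tendsto_diff tendsto_const g)
        ultimately show ?thesis using tendsto_le[OF _ tendsto_const] by (metis trivial_limit_sequentially)
      qed
      then have "norm (s k - z) \<le> r / 2"
        by (intro norm_bound) (simp add: zapp)
      then show ?thesis using r by simp
    qed
    then show "\<exists>no. \<forall>k\<ge>no. norm (norm (s k - z) - 0) < r" by blast
  qed
  then show ?thesis by blast
qed

lemma amb_banach: "banach_on (UNIV :: amb set) norm"
proof -
  have n: "norm_on (UNIV :: amb set) norm"
    unfolding norm_on_def by (simp add: norm_triangle_ineq)
  have c: "complete_on (UNIV :: amb set) norm"
    unfolding complete_on_def using amb_complete by blast
  show ?thesis unfolding banach_on_def using n c by simp
qed



lemma onorm_attained:
  fixes T :: "'a::real_normed_vector \<Rightarrow> 'b::real_normed_vector" and Ba :: "'a set"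
  assumes Ba: "fdb Ba" and T: "bounded_linear T" and nz: "\<not> (\<forall>x. T x = 0)"
  shows "\<exists>x0. norm x0 \<le> 1 \<and> norm (T x0) = onorm T"
proof -
  define \<nu> where "\<nu> = onorm T"
  have \<nu>pos: "\<nu> > 0" using onorm_pos_lt[OF T] nz by (simp add: \<nu>_def)
  define e where "e k = \<nu> / real (Suc (Suc k))" for k
  have epos: "e k > 0" for k using \<nu>pos by (simp add: e_def)
  have elt: "e k < \<nu>" for k
  proof -
    have "\<nu> / real (Suc (Suc k)) < \<nu> / 1" using \<nu>pos by (intro divide_strict_left_mono) auto
    then show ?thesis by (simp add: e_def)
  qed
  have bdd: "bdd_above (range (\<lambda>x. norm (T x) / norm x))"
    using le_onorm[OF T] by (intro bdd_aboveI2) auto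
  have "\<exists>u. norm u = 1 \<and> norm (T u) > \<nu> - e k" for k
  proof -
    have "\<nu> - e k < (SUP x. norm (T x) / norm x)" using epos[of k] by (simp add: \<nu>_def onorm_def)
    then obtain x where x: "\<nu> - e k < norm (T x) / norm x"
      using less_cSUP_iff[OF _ bdd] by blast
    then have "x \<noteq> 0" using elt[of k] by auto
    define u where "u = x /\<^sub>R norm x"
    have "norm u = 1" using \<open>x \<noteq> 0\<close> by (simp add: u_def)
    moreover have "norm (T u) = norm (T x) / norm x"
      by (simp add: u_def linear_simps(5)[OF T] divide_inverse mult.commute)
    ultimately show ?thesis using x by auto
  qed
  then obtain u where u: "\<And>k. norm (u k) = 1" "\<And>k. norm (T (u k)) > \<nu> - e k" by metis
  have "\<exists>l r. l \<in> cball 0 1 \<and> strict_mono r \<and> (u \<circ> r) \<longlonglongrightarrow> l"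
    by (rule fdb_compact_attains[OF Ba]) (use u(1) bounded_cball closed_cball in auto)
  then obtain l r where lr: "l \<in> cball 0 1" "strict_mono r" "(u \<circ> r) \<longlonglongrightarrow> l"
    by blast
  have "(\<lambda>k. norm (T (u (r k)))) \<longlonglongrightarrow> norm (T l)"
    using lr(3) by (intro tendsto_norm bounded_linear.tendsto[OF T]) (simp add: o_def)
  moreover have low: "(\<lambda>k. \<nu> - e k) \<longlonglongrightarrow> \<nu>"
  proof -
    have "(\<lambda>k. 1 / real (Suc (Suc k))) \<longlonglongrightarrow> 0"
      using LIMSEQ_Suc[OF LIMSEQ_Suc[OF lim_inverse_n']] by (simp add: o_def)
    then have "(\<lambda>k. \<nu> * (1 / real (Suc (Suc k)))) \<longlonglongrightarrow> \<nu> * 0"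
      by (intro tendsto_mult tendsto_const)
    then have "(\<lambda>k. e k) \<longlonglongrightarrow> 0" by (simp add: e_def)
    then have "(\<lambda>k. \<nu> - e k) \<longlonglongrightarrow> \<nu> - 0" by (intro tendsto_diff tendsto_const)
    then show ?thesis by simp
  qed
  moreover have lowb: "\<nu> - e k \<le> norm (T (u (r k)))" for k
  proof -
    have "k \<le> r k" using seq_suble[OF lr(2)] by simp
    then have "e (r k) \<le> e k" unfolding e_def using \<nu>pos
      by (intro divide_left_mono) auto
    then show ?thesis using u(2)[of "r k"] by linarith
  qed
  ultimately have "\<nu> \<le> norm (T l)"
    by (intro tendsto_le[OF trivial_limit_sequentially, of "\<lambda>k. norm (T (u (r k)))" _ "\<lambda>k. \<nu> - e k"])
      (auto intro: always_eventually)
  moreover have "norm (T l) \<le> \<nu>"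
  proof -
    have "norm (T l) \<le> \<nu> * norm l" using onorm[OF T, of l] by (simp add: \<nu>_def)
    also have "\<dots> \<le> \<nu> * 1" using lr(1) \<nu>pos by (intro mult_left_mono) auto
    finally show ?thesis by simp
  qed
  ultimately show ?thesis using lr(1) by (intro exI[of _ l]) (simp add: \<nu>_def)
qed

lemma dense_seq:
  fixes Ba :: "'a::real_normed_vector set"
  assumes Ba: "fdb Ba"
  shows "\<exists>d::nat \<Rightarrow> 'a. \<forall>x. \<forall>e>0. \<exists>n. norm (x - d n) < e"
proof -
  have fin: "finite Ba" using Ba unfolding fdb_def by simp
  define D where "D = (\<lambda>q. \<Sum>b\<in>Ba. q b *\<^sub>R b) ` (PiE Ba (\<lambda>_. \<rat>))"
  have cD: "countable D" unfolding D_def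
    by (intro countable_image countable_PiE fin countable_rat)
  have "(\<lambda>b\<in>Ba. 0) \<in> PiE Ba (\<lambda>_. \<rat>)" by auto
  then have neD: "D \<noteq> {}" unfolding D_def by blast
  define d where "d = from_nat_into D"
  have rd: "range d = D" unfolding d_def using range_from_nat_into[OF neD cD] .
  have "\<exists>n. norm (x - d n) < e" if e: "e > 0" for x e
  proof -
    define K where "K = (\<Sum>b\<in>Ba. norm b) + 1"
    have Kpos: "K > 0" unfolding K_def by (smt (verit) norm_ge_zero sum_nonneg)
    define \<delta> where "\<delta> = e / K"
    have \<delta>pos: "\<delta> > 0" using e Kpos by (simp add: \<delta>_def)
    have "\<forall>b. \<exists>q. q \<in> \<rat> \<and> representation Ba x b < q \<and> q < representation Ba x b + \<delta>"
      using Rats_dense_in_real \<delta>pos by (metis less_add_same_cancel1)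
    then obtain q where q: "\<And>b. q b \<in> \<rat>" "\<And>b. representation Ba x b < q b" "\<And>b. q b < representation Ba x b + \<delta>"
      by metis
    have qD: "(\<Sum>b\<in>Ba. q b *\<^sub>R b) \<in> D"
    proof -
      have m: "restrict q Ba \<in> PiE Ba (\<lambda>_. \<rat>)" using q(1) by auto
      have eq: "(\<Sum>b\<in>Ba. q b *\<^sub>R b) = (\<lambda>q. \<Sum>b\<in>Ba. q b *\<^sub>R b) (restrict q Ba)" by simp
      show ?thesis unfolding D_def
        by (rule rev_image_eqI[where f="\<lambda>q. \<Sum>b\<in>Ba. q b *\<^sub>R b", OF m eq])
    qed
    have "x - (\<Sum>b\<in>Ba. q b *\<^sub>R b) = (\<Sum>b\<in>Ba. (representation Ba x b - q b) *\<^sub>R b)"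
      using fdb_rep[OF Ba, of x] by (simp add: scaleR_diff_left sum_subtractf)
    then have "norm (x - (\<Sum>b\<in>Ba. q b *\<^sub>R b)) \<le> (\<Sum>b\<in>Ba. norm ((representation Ba x b - q b) *\<^sub>R b))"
      using norm_sum by metis
    also have "\<dots> = (\<Sum>b\<in>Ba. \<bar>representation Ba x b - q b\<bar> * norm b)" by simp
    also have "\<dots> \<le> (\<Sum>b\<in>Ba. \<delta> * norm b)"
    proof (intro sum_mono mult_right_mono)
      fix b show "\<bar>representation Ba x b - q b\<bar> \<le> \<delta>" using q(2)[of b] q(3)[of b] by linarith
    qed simp
    also have "\<dots> = \<delta> * (K - 1)" by (simp add: K_def sum_distrib_left)
    also have "\<dots> < e" using \<delta>pos Kpos by (simp add: \<delta>_def field_simps)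
    finally have lt: "norm (x - (\<Sum>b\<in>Ba. q b *\<^sub>R b)) < e" .
    have "(\<Sum>b\<in>Ba. q b *\<^sub>R b) \<in> range d" using qD rd by simp
    then obtain n where n: "(\<Sum>b\<in>Ba. q b *\<^sub>R b) = d n" by blast
    show ?thesis using lt unfolding n by blast
  qed
  then show ?thesis by (intro exI[of _ d]) blast
qed



lemma core:
  fixes T :: "'a::real_normed_vector \<Rightarrow> 'b::real_normed_vector"
    and S :: "amb \<Rightarrow> 'b" and y0 :: "'b \<Rightarrow> real" and \<psi>n :: "nat \<Rightarrow> 'a \<Rightarrow> real"
    and Ba :: "'a set" and Wd :: "('a \<Rightarrow>\<^sub>L real) set" and x0 x :: 'a and \<nu> :: real
  assumes Ba: "fdb Ba" and Wd: "finite Wd" "span Wd = UNIV"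
    and \<nu>: "\<nu> > 0" and x0: "norm x0 \<le> 1" and y0x0: "y0 (T x0) = \<nu>"
    and y0: "linear y0" "\<And>y. \<bar>y0 y\<bar> \<le> norm y"
    and perp: "\<And>f::'a \<Rightarrow>\<^sub>L real. norm f \<le> 1 \<Longrightarrow> blinfun_apply f x0 = 1 \<Longrightarrow> blinfun_apply f x = 0"
    and y0x: "y0 (T x) = 0"
    and \<psi>lin: "\<And>n. linear (\<psi>n n)" and \<psi>b: "\<And>n y. \<bar>\<psi>n n y\<bar> \<le> norm y"
    and Sadd: "\<And>z w. S (z + w) = S z + S w" and Ssc: "\<And>a z. S (a *\<^sub>R z) = a *\<^sub>R S z"
    and Sb: "\<And>z. norm (S z) \<le> \<nu> * norm z"
    and SJ: "\<And>y. S (Bcontfun (\<lambda>n. \<psi>n n y)) = T y"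
    and xn: "norm x \<le> 1"
  shows "\<exists>p q. norm p \<le> 1 \<and> y0 p = 1 \<and> norm q \<le> 1 \<and> y0 q = 1 \<and> p - q = (2/\<nu>) *\<^sub>R T x"
proof -
  define J where "J y = Bcontfun (\<lambda>n. \<psi>n n y)" for y
  have Japp: "apply_bcontfun (J y) = (\<lambda>n. \<psi>n n y)" for y
    unfolding J_def by (rule bc_apply[of _ "norm y"]) (rule \<psi>b)
  have SJ': "S (J y) = T y" for y unfolding J_def by (rule SJ)
  define u where "u n = \<psi>n n x0" for n
  define v where "v n = \<psi>n n x" for n
  have hu: "\<bar>u n\<bar> \<le> 1" for n using \<psi>b[of n x0] x0 unfolding u_def by linarith
  have hv: "\<bar>v n\<bar> \<le> 1" for n using \<psi>b[of n x] xn unfolding v_def by linarith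
  define a where "a n = (if u n \<ge> 0 then - max 0 (u n + \<bar>v n\<bar> - 1) else max 0 (- u n + \<bar>v n\<bar> - 1))" for n
  have ha1: "\<bar>a n\<bar> \<le> \<bar>v n\<bar>" for n
    using hu[of n] hv[of n] unfolding a_def by (auto simp: abs_if max_def)
  have ha2: "\<bar>u n + v n + a n\<bar> \<le> 1" for n
    using hu[of n] hv[of n] unfolding a_def by (auto simp: abs_if max_def)
  have ha3: "\<bar>u n + - v n + a n\<bar> \<le> 1" for n
    using hu[of n] hv[of n] unfolding a_def by (auto simp: abs_if max_def)
  have ha4: "\<bar>a n\<bar> \<le> 1" for n using ha1[of n] hv[of n] by linarith
  define aC where "aC = Bcontfun a"
  have aapp: "apply_bcontfun aC = a" unfolding aC_def by (rule bc_apply[of _ 1]) (rule ha4)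
  define \<psi> where "\<psi> z = y0 (S z)" for z
  have \<psi>add: "\<psi> (z + w) = \<psi> z + \<psi> w" for z w
    unfolding \<psi>_def Sadd using y0(1) by (simp add: linear_add)
  have \<psi>sc: "\<psi> (c *\<^sub>R z) = c * \<psi> z" for c z
    unfolding \<psi>_def Ssc using y0(1) by (simp add: linear_scale)
  have \<psi>bd: "\<bar>\<psi> z\<bar> \<le> \<nu> * norm z" for z
    unfolding \<psi>_def using y0(2)[of "S z"] Sb[of z] by linarith
  have \<psi>Jx0: "\<psi> (J x0) = \<nu>" unfolding \<psi>_def SJ' by (rule y0x0)
  have \<psi>Jx: "\<psi> (J x) = 0" unfolding \<psi>_def SJ' by (rule y0x)
  have \<psi>a: "\<psi> aC \<ge> 0"
  proof (rule ccontr)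
    assume neg: "\<not> \<psi> aC \<ge> 0"
    define \<epsilon> where "\<epsilon> = - \<psi> aC / (2 * \<nu>)"
    have \<epsilon>pos: "\<epsilon> > 0" using neg \<nu> by (simp add: \<epsilon>_def field_simps)
    obtain \<eta> where \<eta>: "\<eta> > 0" "\<forall>f::'a \<Rightarrow>\<^sub>L real. norm f \<le> 1 \<and> \<bar>blinfun_apply f x0\<bar> \<ge> 1 - \<eta> \<longrightarrow> \<bar>blinfun_apply f x\<bar> \<le> \<epsilon>"
      using claimA[OF Wd x0 perp \<epsilon>pos] by blast
    define fn where "fn n = Blinfun (\<psi>n n)" for n
    have fnapp: "blinfun_apply (fn n) = \<psi>n n" for n
      unfolding fn_def by (intro bounded_linear_Blinfun_apply fdb_bounded_linear[OF Ba \<psi>lin])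
    have fnn: "norm (fn n) \<le> 1" for n
      by (rule norm_blinfun_bound) (use \<psi>b in \<open>auto simp: fnapp\<close>)
    have h\<eta>: "\<bar>v n\<bar> \<le> \<epsilon>" if "\<bar>u n\<bar> \<ge> 1 - \<eta>" for n
      using \<eta>(2)[rule_format, of "fn n"] fnn[of n] that unfolding u_def v_def fnapp by blast
    define \<eta>' where "\<eta>' = min \<eta> 1"
    have \<eta>'pos: "\<eta>' > 0" and \<eta>'le: "\<eta>' \<le> \<eta>" "\<eta>' \<le> 1" using \<eta>(1) by (auto simp: \<eta>'_def)
    define b where "b n = (if \<bar>u n\<bar> < 1 - \<eta>' then a n else 0)" for n
    have hb: "\<bar>b n\<bar> \<le> 1" for n using ha4[of n] by (simp add: b_def)
    define bC where "bC = Bcontfun b"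
    have bapp: "apply_bcontfun bC = b" unfolding bC_def by (rule bc_apply[of _ 1]) (rule hb)
    have n1: "norm (J x0 + \<eta>' *\<^sub>R bC) \<le> 1"
    proof (rule norm_bound)
      fix n
      have "\<bar>u n + \<eta>' * b n\<bar> \<le> 1"
      proof (cases "\<bar>u n\<bar> < 1 - \<eta>'")
        case True
        have "\<bar>\<eta>' * b n\<bar> \<le> \<eta>'" using hb[of n] \<eta>'pos by (simp add: abs_mult mult_le_cancel_left1)
        then show ?thesis using True by linarith
      next
        case False then show ?thesis using hu[of n] by (simp add: b_def)
      qed
      then show "norm (apply_bcontfun (J x0 + \<eta>' *\<^sub>R bC) n) \<le> 1"
        by (simp add: Japp bapp u_def)
    qed
    have n2: "norm (J x0 + (- \<eta>') *\<^sub>R bC) \<le> 1"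
    proof (rule norm_bound)
      fix n
      have "\<bar>u n - \<eta>' * b n\<bar> \<le> 1"
      proof (cases "\<bar>u n\<bar> < 1 - \<eta>'")
        case True
        have "\<bar>\<eta>' * b n\<bar> \<le> \<eta>'" using hb[of n] \<eta>'pos by (simp add: abs_mult mult_le_cancel_left1)
        then show ?thesis using True by linarith
      next
        case False then show ?thesis using hu[of n] by (simp add: b_def)
      qed
      then show "norm (apply_bcontfun (J x0 + (- \<eta>') *\<^sub>R bC) n) \<le> 1"
        by (simp add: Japp bapp u_def)
    qed
    have "\<psi> (J x0 + \<eta>' *\<^sub>R bC) \<le> \<nu> * 1"
      using \<psi>bd[of "J x0 + \<eta>' *\<^sub>R bC"] mult_left_mono[OF n1, of \<nu>] \<nu> by linarith
    then have i1: "\<eta>' * \<psi> bC \<le> 0" using \<psi>add \<psi>sc \<psi>Jx0 by simp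
    have "\<psi> (J x0 + (- \<eta>') *\<^sub>R bC) \<le> \<nu> * 1"
      using \<psi>bd[of "J x0 + (- \<eta>') *\<^sub>R bC"] mult_left_mono[OF n2, of \<nu>] \<nu> by linarith
    moreover have "\<psi> (J x0 + (- \<eta>') *\<^sub>R bC) = \<nu> + (- \<eta>') * \<psi> bC" using \<psi>add \<psi>sc \<psi>Jx0 by presburger
    ultimately have i2: "- \<eta>' * \<psi> bC \<le> 0" by simp
    have "\<psi> bC \<le> 0" using i1 \<eta>'pos by (simp add: mult_le_0_iff)
    moreover have "\<psi> bC \<ge> 0" using i2 \<eta>'pos by (simp add: zero_le_mult_iff)
    ultimately have \<psi>bC: "\<psi> bC = 0" by simp
    have n3: "norm (aC - bC) \<le> \<epsilon>"
    proof (rule norm_bound)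
      fix n
      have "\<bar>a n - b n\<bar> \<le> \<epsilon>"
      proof (cases "\<bar>u n\<bar> < 1 - \<eta>'")
        case True then show ?thesis using \<epsilon>pos by (simp add: b_def)
      next
        case False
        then have "\<bar>u n\<bar> \<ge> 1 - \<eta>" using \<eta>'le by linarith
        then have "\<bar>v n\<bar> \<le> \<epsilon>" by (rule h\<eta>)
        then show ?thesis using False ha1[of n] by (simp add: b_def)
      qed
      then show "norm (apply_bcontfun (aC - bC) n) \<le> \<epsilon>" by (simp add: aapp bapp)
    qed
    have "\<psi> aC = \<psi> (aC - bC) + \<psi> bC" using \<psi>add[of "aC - bC" bC] by simp
    also have "\<dots> = \<psi> (aC - bC)" using \<psi>bC by simp
    finally have eqa: "\<psi> aC = \<psi> (aC - bC)" .
    have "\<bar>\<psi> (aC - bC)\<bar> \<le> \<nu> * \<epsilon>" using \<psi>bd[of "aC - bC"] mult_left_mono[OF n3, of \<nu>] \<nu>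
      by linarith
    moreover have "\<nu> * \<epsilon> = - \<psi> aC / 2" using \<nu> by (simp add: \<epsilon>_def field_simps)
    ultimately show False using eqa neg by linarith
  qed
  define zp where "zp = J x0 + J x + aC"
  define zq where "zq = J x0 + (-1) *\<^sub>R J x + aC"
  have nzp: "norm zp \<le> 1"
    unfolding zp_def by (rule norm_bound) (simp add: Japp aapp ha2[unfolded u_def v_def])
  have nzq: "norm zq \<le> 1"
    unfolding zq_def by (rule norm_bound) (use ha3[unfolded u_def v_def] in \<open>simp add: Japp aapp\<close>)
  define p where "p = (1/\<nu>) *\<^sub>R S zp"
  define q where "q = (1/\<nu>) *\<^sub>R S zq"
  have np: "norm p \<le> 1"
  proof -
    have "norm (S zp) \<le> \<nu>" using Sb[of zp] mult_left_mono[OF nzp, of \<nu>] \<nu> by linarith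
    then show ?thesis using \<nu> by (simp add: p_def field_simps)
  qed
  have nq: "norm q \<le> 1"
  proof -
    have "norm (S zq) \<le> \<nu>" using Sb[of zq] mult_left_mono[OF nzq, of \<nu>] \<nu> by linarith
    then show ?thesis using \<nu> by (simp add: q_def field_simps)
  qed
  have "y0 p = (1/\<nu>) * \<psi> zp" unfolding p_def \<psi>_def using y0(1) by (simp add: linear_scale)
  also have "\<psi> zp = \<nu> + \<psi> aC" unfolding zp_def using \<psi>add \<psi>Jx0 \<psi>Jx by simp
  finally have "y0 p = (1/\<nu>) * (\<nu> + \<psi> aC)" .
  also have "\<dots> = 1 + \<psi> aC / \<nu>" using \<nu> by (simp add: field_simps)
  finally have "y0 p \<ge> 1" using \<psi>a \<nu> by simp
  moreover have "y0 p \<le> 1" using y0(2)[of p] np by linarith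
  ultimately have y0p: "y0 p = 1" by simp
  have "y0 q = (1/\<nu>) * \<psi> zq" unfolding q_def \<psi>_def using y0(1) by (simp add: linear_scale)
  also have "\<psi> zq = \<nu> + \<psi> aC" unfolding zq_def by (simp only: \<psi>add \<psi>sc \<psi>Jx0 \<psi>Jx)
  finally have "y0 q = (1/\<nu>) * (\<nu> + \<psi> aC)" .
  also have "\<dots> = 1 + \<psi> aC / \<nu>" using \<nu> by (simp add: field_simps)
  finally have "y0 q \<ge> 1" using \<psi>a \<nu> by simp
  moreover have "y0 q \<le> 1" using y0(2)[of q] nq by linarith
  ultimately have y0q: "y0 q = 1" by simp
  have "S zp - S zq = 2 *\<^sub>R T x"
    unfolding zp_def zq_def Sadd Ssc SJ' by (simp add: algebra_simps scaleR_2)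
  then have "p - q = (2/\<nu>) *\<^sub>R T x"
    unfolding p_def q_def by (metis (no_types, lifting) scaleR_diff_right scaleR_scaleR times_divide_eq_left mult_1)
  then show ?thesis using np nq y0p y0q by blast
qed



theorem mainTheorem2:
  fixes T :: "'a::real_normed_vector \<Rightarrow> 'b::real_normed_vector" and k :: nat
  assumes "fin_dim_space TYPE('a)" and "fin_dim_space TYPE('b)"
    and "hahn_banach_op T" and "dim (range T) = k"
  shows "fX TYPE('a \<Rightarrow>\<^sub>L real) + fX TYPE('b) \<ge> k - 1"
proof (cases "k \<le> 1")
  case True
  then show ?thesis by simp
next
  case False
  obtain Ba :: "'a set" where Ba: "fdb Ba" using fin_dim_fdb[OF assms(1)] by blast
  obtain Bb :: "'b set" where Bb: "fdb Bb" using fin_dim_fdb[OF assms(2)] by blast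
  have Bb': "finite Bb" "span Bb = UNIV" using Bb unfolding fdb_def by auto
  obtain Wd :: "('a \<Rightarrow>\<^sub>L real) set" where Wd: "finite Wd" "span Wd = UNIV"
    using fdb_dual[OF Ba] by blast
  have Tbl: "bounded_linear T" using assms(3) unfolding hahn_banach_op_def by blast
  have ext: "\<exists>S::amb \<Rightarrow> 'b. linear_on V S \<and> bounded_on V N S \<and> opnorm_on V N S = onorm T \<and> (\<forall>x. S (J x) = T x)"
    if "banach_on V N" "linear J" "\<forall>x. J x \<in> V" "\<forall>x. N (J x) = norm x"
    for V N and J :: "'a \<Rightarrow> amb"
    using assms(3) that unfolding hahn_banach_op_def by blast
  have Tlin: "linear T" using Tbl by (rule bounded_linear.linear)
  have nz: "\<not> (\<forall>x. T x = 0)"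
  proof
    assume "\<forall>x. T x = 0"
    then have "range T \<subseteq> span {}" by (auto simp: span_empty)
    then have "dim (range T) \<le> card ({} :: 'b set)" by (intro dim_le_card) auto
    then show False using assms(4) False by simp
  qed
  define \<nu> where "\<nu> = onorm T"
  have \<nu>pos: "\<nu> > 0" using onorm_pos_lt[OF Tbl] nz by (simp add: \<nu>_def)
  obtain x0 where x0: "norm x0 \<le> 1" "norm (T x0) = \<nu>"
    using onorm_attained[OF Ba Tbl nz] by (auto simp: \<nu>_def)
  obtain y0 where y0: "linear y0" "\<And>y. \<bar>y0 y\<bar> \<le> norm y" "y0 (T x0) = norm (T x0)"
    using hb_fin[OF Bb, of "T x0"] by blast
  have y0x0: "y0 (T x0) = \<nu>" using y0(3) x0(2) by simp
  have Tb: "norm (T x) \<le> \<nu> * norm x" for x using onorm[OF Tbl] by (simp add: \<nu>_def)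
  have glin: "linear (\<lambda>x. y0 (T x) / \<nu>)"
    by (rule linearI) (simp_all add: linear_add[OF Tlin] linear_add[OF y0(1)] linear_scale[OF Tlin]
        linear_scale[OF y0(1)] add_divide_distrib)
  define g0 where "g0 = Blinfun (\<lambda>x. y0 (T x) / \<nu>)"
  have g0app: "blinfun_apply g0 x = y0 (T x) / \<nu>" for x
    unfolding g0_def by (subst bounded_linear_Blinfun_apply[OF fdb_bounded_linear[OF Ba glin]]) simp
  have ng0: "norm g0 \<le> 1"
  proof (rule norm_blinfun_bound)
    fix x
    have "\<bar>y0 (T x)\<bar> \<le> \<nu> * norm x" using y0(2)[of "T x"] Tb[of x] by linarith
    then show "norm (blinfun_apply g0 x) \<le> 1 * norm x"
      using \<nu>pos by (simp add: g0app abs_divide field_simps)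
  qed simp
  have g0x0: "blinfun_apply g0 x0 = 1" using \<nu>pos by (simp add: g0app y0x0)
  define G where "G = cball (0::'a \<Rightarrow>\<^sub>L real) 1 \<inter> {f. blinfun_apply f x0 = 1}"
  define FY where "FY = cball (0::'b) 1 \<inter> {y. y0 y = 1}"
  have g0G: "g0 \<in> G" using ng0 g0x0 by (simp add: G_def)
  have suppG: "support_set (cball 0 1) G"
    unfolding support_set_def
  proof (intro exI[of _ "\<lambda>f::'a \<Rightarrow>\<^sub>L real. blinfun_apply f x0"] exI[of _ 1] conjI)
    show "linear (\<lambda>f::'a \<Rightarrow>\<^sub>L real. blinfun_apply f x0)"
      by (rule linearI) (simp_all add: plus_blinfun.rep_eq scaleR_blinfun.rep_eq)
    show "(\<lambda>f::'a \<Rightarrow>\<^sub>L real. blinfun_apply f x0) \<noteq> (\<lambda>x. 0)"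
      using g0x0 by (metis zero_neq_one)
    have "blinfun_apply f x0 \<le> 1" if "f \<in> cball 0 1" for f :: "'a \<Rightarrow>\<^sub>L real"
    proof -
      have nf: "norm f \<le> 1" using that by simp
      have "blinfun_apply f x0 \<le> norm f * norm x0" using norm_blinfun[of f x0] by simp
      also have "\<dots> \<le> 1" using nf x0(1) by (simp add: mult_le_one)
      finally show ?thesis .
    qed
    then show "\<forall>f\<in>cball (0::'a \<Rightarrow>\<^sub>L real) 1. blinfun_apply f x0 \<le> 1" by blast
    show "\<exists>f\<in>cball (0::'a \<Rightarrow>\<^sub>L real) 1. blinfun_apply f x0 = 1" using g0G by (auto simp: G_def)
    show "G = cball 0 1 \<inter> {f. blinfun_apply f x0 = 1}" by (simp add: G_def)
  qed
  have suppF: "support_set (cball 0 1) FY"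
    unfolding support_set_def
  proof (intro exI[of _ y0] exI[of _ 1] conjI)
    show "linear y0" by (rule y0(1))
    show "y0 \<noteq> (\<lambda>x. 0)" using y0x0 \<nu>pos by auto
    have "y0 y \<le> 1" if "y \<in> cball 0 1" for y
      using y0(2)[of y] that by simp
    then show "\<forall>y\<in>cball (0::'b) 1. y0 y \<le> 1" by blast
    have "y0 ((1/\<nu>) *\<^sub>R T x0) = 1" using \<nu>pos by (simp add: linear_scale[OF y0(1)] y0x0)
    moreover have "norm ((1/\<nu>) *\<^sub>R T x0) = 1" using \<nu>pos x0(2) by simp
    ultimately show "\<exists>y\<in>cball 0 1. y0 y = 1" by (intro bexI[of _ "(1/\<nu>) *\<^sub>R T x0"]) auto
    show "FY = cball 0 1 \<inter> {y. y0 y = 1}" by (simp add: FY_def)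
  qed
  obtain d :: "nat \<Rightarrow> 'a" where d: "\<And>x e. e > 0 \<Longrightarrow> \<exists>n. norm (x - d n) < e"
    using dense_seq[OF Ba] by blast
  have "\<forall>n. \<exists>\<phi>. linear \<phi> \<and> (\<forall>y. \<bar>\<phi> y\<bar> \<le> norm y) \<and> \<phi> (d n) = norm (d n)"
    using hb_fin[OF Ba] by blast
  then obtain \<psi>n where \<psi>n: "\<And>n. linear (\<psi>n n)" "\<And>n y. \<bar>\<psi>n n y\<bar> \<le> norm y"
    "\<And>n. \<psi>n n (d n) = norm (d n)"
    by metis
  define J where "J y = Bcontfun (\<lambda>n. \<psi>n n y)" for y
  have Japp: "apply_bcontfun (J y) = (\<lambda>n. \<psi>n n y)" for y
    unfolding J_def by (rule bc_apply[of _ "norm y"]) (rule \<psi>n(2))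
  have Jlin: "linear J"
    by (rule linearI; rule bcontfun_eqI)
      (simp_all add: Japp linear_add[OF \<psi>n(1)] linear_scale[OF \<psi>n(1)])
  have Jnorm: "norm (J y) = norm y" for y
  proof (rule antisym)
    show "norm (J y) \<le> norm y" unfolding J_def by (rule bc_norm_le) (rule \<psi>n(2))
    show "norm y \<le> norm (J y)"
    proof (rule field_le_epsilon)
      fix e :: real assume e: "e > 0"
      obtain n where n: "norm (y - d n) < e / 2" using d[of "e/2"] e by auto
      have "\<psi>n n y = \<psi>n n (d n) + \<psi>n n (y - d n)"
        using linear_add[OF \<psi>n(1), of n "d n" "y - d n"] by simp
      moreover have "norm (d n) \<ge> norm y - norm (y - d n)"
        using norm_triangle_ineq2[of y "d n"] by (simp add: norm_minus_commute)
      moreover have "\<bar>\<psi>n n (y - d n)\<bar> \<le> norm (y - d n)" by (rule \<psi>n(2))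
      moreover have "\<psi>n n y \<le> norm (J y)"
        using bc_le_norm[of "J y" n] by (simp add: Japp)
      ultimately show "norm y \<le> norm (J y) + e" using \<psi>n(3)[of n] n by linarith
    qed
  qed
  obtain S :: "amb \<Rightarrow> 'b" where S: "linear_on UNIV S" "bounded_on UNIV norm S"
    "opnorm_on UNIV norm S = onorm T" "\<And>x. S (J x) = T x"
    using ext[OF amb_banach Jlin] Jnorm by auto
  have Sadd: "S (z + w) = S z + S w" for z w using S(1) unfolding linear_on_def by blast
  have Ssc: "S (a *\<^sub>R z) = a *\<^sub>R S z" for a z using S(1) unfolding linear_on_def by blast
  have S0: "S 0 = 0" using Ssc[of 0 0] by simp
  obtain K where K: "\<And>z. norm (S z) \<le> K * norm z" using S(2) unfolding bounded_on_def by blast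
  have Sb: "norm (S z) \<le> \<nu> * norm z" for z
  proof (cases "z = 0")
    case True then show ?thesis using S0 by simp
  next
    case False
    define u where "u = (1 / norm z) *\<^sub>R z"
    have nu: "norm u = 1" using False by (simp add: u_def)
    have bdd: "bdd_above {norm (S z) | z. z \<in> UNIV \<and> norm z \<le> 1}"
    proof (rule bdd_aboveI)
      fix t assume "t \<in> {norm (S z) | z. z \<in> UNIV \<and> norm z \<le> 1}"
      then obtain w where w: "t = norm (S w)" "norm w \<le> 1" by blast
      have "norm (S w) \<le> K * norm w" by (rule K)
      also have "\<dots> \<le> \<bar>K\<bar> * norm w" by (intro mult_right_mono) auto
      also have "\<dots> \<le> \<bar>K\<bar> * 1" using w(2) by (intro mult_left_mono) auto
      finally show "t \<le> \<bar>K\<bar>" using w(1) by simp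
    qed
    have "norm (S u) \<le> Sup {norm (S z) | z. z \<in> UNIV \<and> norm z \<le> 1}"
      using nu by (intro cSup_upper[OF _ bdd]) auto
    also have "\<dots> = \<nu>" using S(3) unfolding opnorm_on_def \<nu>_def by simp
    finally have "norm (S u) \<le> \<nu>" .
    moreover have "S u = (1 / norm z) *\<^sub>R S z" unfolding u_def by (rule Ssc)
    ultimately have "norm (S z) / norm z \<le> \<nu>" using False by simp
    then show ?thesis using False by (simp add: field_simps)
  qed
  have SJ: "S (Bcontfun (\<lambda>n. \<psi>n n y)) = T y" for y using S(4)[of y] by (simp add: J_def)
  define DY where "DY = {p - q | p q. p \<in> FY \<and> q \<in> FY}"
  have key: "T x \<in> span DY" if perpx: "\<forall>f\<in>G. blinfun_apply f x = 0" for x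
  proof (cases "x = 0")
    case True then show ?thesis using linear_0[OF Tlin] by (simp add: span_zero)
  next
    case False
    define x' where "x' = (1 / norm x) *\<^sub>R x"
    have nx': "norm x' \<le> 1" using False by (simp add: x'_def)
    have perp': "blinfun_apply f x' = 0" if "norm f \<le> 1" "blinfun_apply f x0 = 1" for f :: "'a \<Rightarrow>\<^sub>L real"
    proof -
      have "f \<in> G" using that by (simp add: G_def)
      then show ?thesis using perpx by (simp add: x'_def blinfun.scaleR_right)
    qed
    have y0x': "y0 (T x') = 0"
    proof -
      have "blinfun_apply g0 x' = 0" using perp' ng0 g0x0 by blast
      then show ?thesis using \<nu>pos by (simp add: g0app)
    qed
    obtain p q where pq: "norm p \<le> 1" "y0 p = 1" "norm q \<le> 1" "y0 q = 1" "p - q = (2/\<nu>) *\<^sub>R T x'"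
      using core[OF Ba Wd \<nu>pos x0(1) y0x0 y0(1) y0(2) perp' y0x' \<psi>n(1) \<psi>n(2) Sadd Ssc Sb SJ nx']
      by blast
    have "p \<in> FY" "q \<in> FY" using pq unfolding FY_def by auto
    then have "p - q \<in> DY" unfolding DY_def by blast
    then have "(\<nu> / 2) *\<^sub>R (p - q) \<in> span DY" by (intro span_scale span_base)
    moreover have "(\<nu> / 2) *\<^sub>R (p - q) = T x'" using pq(5) \<nu>pos by simp
    ultimately have "T x' \<in> span DY" by simp
    then have "norm x *\<^sub>R T x' \<in> span DY" by (rule span_scale)
    moreover have "norm x *\<^sub>R T x' = T x"
      using False by (simp add: x'_def linear_scale[OF Tlin])
    ultimately show ?thesis by simp
  qed
  obtain H where H: "H \<subseteq> G" "independent H" "G \<subseteq> span H" "card H = dim G"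
    using basis_exists[of G] by blast
  have finH: "finite H" using independent_span_bound[OF Wd(1) H(2)] Wd(2) by auto
  define W where "W = {x. \<forall>h\<in>H. blinfun_apply h x = 0}"
  have WG: "\<forall>f\<in>G. blinfun_apply f x = 0" if "x \<in> W" for x
  proof -
    have sub: "subspace {f :: 'a \<Rightarrow>\<^sub>L real. blinfun_apply f x = 0}"
      unfolding subspace_def by (simp add: plus_blinfun.rep_eq scaleR_blinfun.rep_eq)
    have "H \<subseteq> {f. blinfun_apply f x = 0}" using that by (auto simp: W_def)
    then have "span H \<subseteq> {f. blinfun_apply f x = 0}" using sub by (rule span_minimal)
    then show ?thesis using H(3) by blast
  qed
  have TW: "T ` W \<subseteq> span DY" using key WG by blast
  obtain E where E: "finite E" "card E \<le> card H" "UNIV \<subseteq> span (W \<union> E)"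
    using codim_lemma[OF finH] unfolding W_def by blast
  have "range T \<subseteq> span (T ` W \<union> T ` E)"
  proof
    fix y assume "y \<in> range T"
    then obtain z where z: "y = T z" by blast
    have "z \<in> span (W \<union> E)" using E(3) by blast
    then have "T z \<in> T ` span (W \<union> E)" by blast
    also have "\<dots> = span (T ` (W \<union> E))" by (simp add: span_linear_image[OF Tlin])
    finally show "y \<in> span (T ` W \<union> T ` E)" using z by (simp add: image_Un)
  qed
  then have "dim (range T) \<le> dim (T ` W) + card (T ` E)"
    by (intro dim_le_span_card[OF Bb'] finite_imageI E(1))
  also have "card (T ` E) \<le> card H" using card_image_le[OF E(1), of T] E(2) by linarith
  finally have k1: "k \<le> dim (T ` W) + card H" using assms(4) by simp
  have "dim (T ` W) \<le> dim DY + card ({} :: 'b set)"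
    using TW by (intro dim_le_span_card[OF Bb']) auto
  then have k2: "dim (T ` W) \<le> affdim FY" by (simp add: affdim_def DY_def)
  define DG where "DG = {f - g | f g. f \<in> G \<and> g \<in> G}"
  have "G \<subseteq> span (DG \<union> {g0})"
  proof
    fix f assume f: "f \<in> G"
    have "f - g0 \<in> DG" using f g0G unfolding DG_def by blast
    then have a: "f - g0 \<in> span (DG \<union> {g0})" by (simp add: span_base)
    have b: "g0 \<in> span (DG \<union> {g0})" by (simp add: span_base)
    have "f = (f - g0) + g0" by simp
    then show "f \<in> span (DG \<union> {g0})" using span_add[OF a b] by simp
  qed
  then have "dim G \<le> dim DG + card {g0}" by (intro dim_le_span_card[OF Wd]) auto
  then have k3: "card H \<le> affdim G + 1" using H(4) by (simp add: affdim_def DG_def)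
  have f1: "affdim FY \<le> fX TYPE('b)" by (rule fX_ge[OF Bb' suppF])
  have f2: "affdim G \<le> fX TYPE('a \<Rightarrow>\<^sub>L real)" by (rule fX_ge[OF Wd suppG])
  show ?thesis using k1 k2 k3 f1 f2 by linarith
qed


end
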